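(* Let $C$ be a Polish space having a countable base $\{B_n:n\in\omega\}$ of non-empty open sets such that each $B_n$ is homeomorphic to $C$. (1) If there is a $Q$-set in $C$ of cardinality $\aleph_2$, then there is a $Q$-set $Z\subseteq C$ of cardinality $\aleph_2$ which is dense in $C$ and satisfies $\Delta(Z)=\aleph_2$. (2) If there is a Luzin set in $C$, then there is a Luzin set in $C$ which is dense in $C$ and locally uncountable (every non-empty relatively open subset of it is uncountable).
   Context: A $Q$-set in a Polish space $C$ is an uncountable subset $Y\subseteq C$ every subset of which is a relative $F_\sigma$ in $Y$. A Luzin set in $C$ is an uncountable subset of $C$ which meets every first category subset of $C$ in a countable set. $\Delta(Z)$ is the least cardinality of a non-empty relatively open subset of $Z$. *)

theory Defs
  imports "HOL-Analysis.Analysis"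
begin

definition aleph2 :: "nat set set rel" where
  "aleph2 = cardSuc (cardSuc natLeq)"

definition nowhere_dense :: "'a::topological_space set \<Rightarrow> bool" where
  "nowhere_dense S \<longleftrightarrow> interior (closure S) = {}"

definition first_category :: "'a::topological_space set \<Rightarrow> bool" where
  "first_category S \<longleftrightarrow> (countable union_of nowhere_dense) S"

definition Q_set :: "'a::topological_space set \<Rightarrow> bool" where
  "Q_set Y \<longleftrightarrow> uncountable Y \<and> (\<forall>A. A \<subseteq> Y \<longrightarrow> fsigma_in (top_of_set Y) A)"

definition Luzin_set :: "'a::topological_space set \<Rightarrow> bool" where
  "Luzin_set Y \<longleftrightarrow> uncountable Y \<and> (\<forall>M. first_category M \<longrightarrow> countable (Y \<inter> M))"

text \<open>\<open>Delta_is Z k\<close>: k is (up to ordinal isomorphism) the least cardinality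
  of a non-empty relatively open subset of Z.\<close>
definition Delta_is :: "'a::topological_space set \<Rightarrow> 'b rel \<Rightarrow> bool" where
  "Delta_is Z k \<longleftrightarrow>
     (\<exists>U. openin (top_of_set Z) U \<and> U \<noteq> {} \<and> (card_of U, k) \<in> ordIso) \<and>
     (\<forall>U. openin (top_of_set Z) U \<and> U \<noteq> {} \<longrightarrow> (k, card_of U) \<in> ordLeq)"

end

theory Submission
  imports Defs
begin
unbundle cardinal_syntax



definition a1 :: "nat set rel" where "a1 = cardSuc natLeq"
definition small :: "'a set \<Rightarrow> bool" where "small S \<longleftrightarrow> (card_of S, a1) \<in> ordLeq"

lemma a1_Card: "Card_order a1" unfolding a1_def by (simp add: cardSuc_Card_order natLeq_Card_order)
lemma aleph2_Card: "Card_order aleph2" unfolding aleph2_def by (simp add: cardSuc_Card_order natLeq_Card_order)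

lemma natLeq_a1: "(natLeq, a1) \<in> ordLeq"
  unfolding a1_def by (simp add: cardSuc_ordLeq natLeq_Card_order)

lemma a1_aleph2: "(a1, aleph2) \<in> ordLeq"
  unfolding aleph2_def a1_def[symmetric] by (simp add: cardSuc_ordLeq a1_Card)

lemma natLeq_aleph2: "(natLeq, aleph2) \<in> ordLeq"
  using ordLeq_transitive[OF natLeq_a1 a1_aleph2] .

lemma countable_le_natLeq: "countable S \<Longrightarrow> (card_of S, natLeq) \<in> ordLeq"
proof -
  assume "countable S"
  then obtain f :: "_ \<Rightarrow> nat" where "inj_on f S" unfolding countable_def by blast
  then have "(card_of S, card_of (UNIV :: nat set)) \<in> ordLeq"
    using card_of_ordLeq by blast
  then show ?thesis using card_of_nat ordLeq_ordIso_trans by blast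
qed

lemma infinite_Field_card: "Card_order r \<Longrightarrow> (natLeq, r) \<in> ordLeq \<Longrightarrow> \<not> finite (Field r)"
proof -
  assume c: "Card_order r" and n: "(natLeq, r) \<in> ordLeq"
  have "(r, card_of (Field r)) \<in> ordIso" using card_of_Field_ordIso[OF c] ordIso_symmetric by blast
  then have "(natLeq, card_of (Field r)) \<in> ordLeq" using n ordLeq_ordIso_trans by blast
  thus ?thesis using infinite_iff_natLeq_ordLeq by blast
qed

lemma infinite_Field_a1: "\<not> finite (Field a1)"
  using infinite_Field_card[OF a1_Card natLeq_a1] .

lemma small_Field: "small S \<longleftrightarrow> (card_of S, card_of (Field a1)) \<in> ordLeq"
proof -
  have i: "(card_of (Field a1), a1) \<in> ordIso" using card_of_Field_ordIso[OF a1_Card] .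
  then have i': "(a1, card_of (Field a1)) \<in> ordIso" using ordIso_symmetric by blast
  show ?thesis unfolding small_def
    using ordLeq_ordIso_trans[OF _ i] ordLeq_ordIso_trans[OF _ i'] by blast
qed

lemma not_small_iff: "\<not> small S \<longleftrightarrow> (aleph2, card_of S) \<in> ordLeq"
proof -
  have w: "Well_order a1" "Well_order (card_of S)"
    using a1_Card card_of_Well_order card_order_on_well_order_on by blast+
  have "(\<not> small S) = ((a1, card_of S) \<in> ordLess)" unfolding small_def using not_ordLeq_iff_ordLess[OF w] by simp
  also have "\<dots> = ((aleph2, card_of S) \<in> ordLeq)" unfolding aleph2_def a1_def[symmetric]
    using cardSuc_ordLess_ordLeq[OF a1_Card card_of_Card_order] .
  finally show ?thesis .
qed

lemma small_mono: "small S \<Longrightarrow> T \<subseteq> S \<Longrightarrow> small T"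
  unfolding small_def using ordLeq_transitive[OF card_of_mono1] by blast

lemma small_Un: "small S \<Longrightarrow> small T \<Longrightarrow> small (S \<union> T)"
  unfolding small_def
  by (rule card_of_Un_ordLeq_infinite_Field[OF infinite_Field_a1 _ _ a1_Card])

lemma countable_small: "countable S \<Longrightarrow> small S"
  unfolding small_def using ordLeq_transitive[OF countable_le_natLeq natLeq_a1] .

lemma small_UN: "countable I \<Longrightarrow> (\<And>i. i \<in> I \<Longrightarrow> small (A i)) \<Longrightarrow> small (\<Union>i\<in>I. A i)"
  unfolding small_Field
  apply (rule card_of_UNION_ordLeq_infinite[OF infinite_Field_a1])
   apply (simp add: countable_small[unfolded small_Field])
  by blast

lemma small_image: "small S \<Longrightarrow> small (f ` S)"
  unfolding small_def using ordLeq_transitive[OF card_of_image] by blast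

lemma small_image_inj: "inj_on f S \<Longrightarrow> small (f ` S) \<Longrightarrow> small S"
  unfolding small_def
  by (meson card_of_ordIso inj_on_imp_bij_betw ordIso_ordLeq_trans)

lemma card_aleph2_iff: "(card_of S, aleph2) \<in> ordIso \<longleftrightarrow> \<not> small S \<and> (card_of S, aleph2) \<in> ordLeq"
  using not_small_iff ordIso_iff_ordLeq by blast

lemma le_aleph2_UN:
  assumes "countable I" "\<And>i. i \<in> I \<Longrightarrow> (card_of (A i), aleph2) \<in> ordLeq"
  shows "(card_of (\<Union>i\<in>I. A i), aleph2) \<in> ordLeq"
proof -
  have iso: "(card_of (Field aleph2), aleph2) \<in> ordIso" using card_of_Field_ordIso[OF aleph2_Card] .
  then have iso': "(aleph2, card_of (Field aleph2)) \<in> ordIso" using ordIso_symmetric by blast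
  have inf: "\<not> finite (Field aleph2)" using infinite_Field_card[OF aleph2_Card natLeq_aleph2] .
  have "(card_of (\<Union>i\<in>I. A i), card_of (Field aleph2)) \<in> ordLeq"
  proof (rule card_of_UNION_ordLeq_infinite[OF inf])
    show "(card_of I, card_of (Field aleph2)) \<in> ordLeq"
      using ordLeq_ordIso_trans[OF ordLeq_transitive[OF countable_le_natLeq[OF assms(1)] natLeq_aleph2] iso'] .
    show "\<forall>i\<in>I. (card_of (A i), card_of (Field aleph2)) \<in> ordLeq"
      using assms(2) ordLeq_ordIso_trans[OF _ iso'] by blast
  qed
  thus ?thesis using ordLeq_ordIso_trans[OF _ iso] by blast
qed

lemma small_uncountable: "\<not> small S \<Longrightarrow> uncountable S"
  using countable_small by blast



definition Qprop :: "'a::topological_space set \<Rightarrow> bool" where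
  "Qprop S \<longleftrightarrow> (\<forall>A. A \<subseteq> S \<longrightarrow> fsigma_in (top_of_set S) A)"

lemma Qprop_alt: "Qprop S \<longleftrightarrow> (\<forall>A. A \<subseteq> S \<longrightarrow> (\<exists>F. fsigma_in euclidean F \<and> A = F \<inter> S))"
  unfolding Qprop_def fsigma_in_subtopology by simp

lemma Q_set_Qprop: "Q_set Y \<longleftrightarrow> uncountable Y \<and> Qprop Y"
  unfolding Q_set_def Qprop_def by simp

lemma Qprop_subset: "Qprop S \<Longrightarrow> T \<subseteq> S \<Longrightarrow> Qprop T"
  unfolding Qprop_alt
proof (intro allI impI)
  fix A assume Q: "\<forall>A. A \<subseteq> S \<longrightarrow> (\<exists>F. fsigma_in euclidean F \<and> A = F \<inter> S)"
    and TS: "T \<subseteq> S" and AT: "A \<subseteq> T"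
  then obtain F where F: "fsigma_in euclidean F" "A = F \<inter> S" by blast
  then have "A = F \<inter> T" using TS AT by blast
  then show "\<exists>F. fsigma_in euclidean F \<and> A = F \<inter> T" using F(1) by blast
qed

lemma fsigma_open: "open S \<Longrightarrow> fsigma_in euclidean (S :: 'a::metric_space set)"
  apply (rule open_imp_fsigma_in[OF metrizable_space_euclidean])
  using open_openin by blast

lemma fsigma_closed: "closed S \<Longrightarrow> fsigma_in euclidean S"
  apply (rule closed_imp_fsigma_in)
  using closed_closedin by blast

lemma fsigma_preimage:
  fixes g :: "'a::metric_space \<Rightarrow> 'b::topological_space"
  assumes oB: "open Bn" and cg: "continuous_on Bn g" and F: "fsigma_in euclidean F"
  shows "fsigma_in euclidean (Bn \<inter> g -` F)"
proof -
  obtain \<V> where V: "countable \<V>" "\<And>V. V \<in> \<V> \<Longrightarrow> closedin euclidean V" "\<Union>\<V> = F"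
    using F unfolding fsigma_in_def union_of_def by blast
  have eq: "Bn \<inter> g -` F = \<Union>((\<lambda>V. Bn \<inter> g -` V) ` \<V>)" using V(3) by blast
  have "fsigma_in euclidean (Bn \<inter> g -` V)" if "V \<in> \<V>" for V
  proof -
    have "closed V" using V(2)[OF that] closed_closedin by blast
    then have "closedin (top_of_set Bn) (Bn \<inter> g -` V)" by (rule continuous_closedin_preimage[OF cg])
    then obtain K where K: "closed K" "Bn \<inter> g -` V = Bn \<inter> K"
      unfolding closedin_closed by blast
    show ?thesis unfolding K(2) by (rule fsigma_in_Int[OF fsigma_open[OF oB] fsigma_closed[OF K(1)]])
  qed
  then show ?thesis unfolding eq using V(1) by (intro fsigma_in_Union) auto
qed

lemma homeo_facts:
  assumes "homeomorphism UNIV Bn f g"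
  shows "\<And>x. g (f x) = x" "\<And>x. f x \<in> Bn" "\<And>y. y \<in> Bn \<Longrightarrow> f (g y) = y"
    "continuous_on UNIV f" "continuous_on Bn g" "inj f"
  using assms unfolding homeomorphism_def
  by (auto intro: inj_on_inverseI)

lemma open_vimage_UNIV: "continuous_on UNIV f \<Longrightarrow> open S \<Longrightarrow> open (f -` S)"
  using continuous_on_open_vimage[of UNIV f] by auto

lemma Qprop_image:
  fixes f g :: "'a::metric_space \<Rightarrow> 'a"
  assumes h: "homeomorphism UNIV Bn f g" and oB: "open Bn" and Q: "Qprop S"
  shows "Qprop (f ` S)"
  unfolding Qprop_alt
proof (intro allI impI)
  note hf = homeo_facts[OF h]
  fix A assume A: "A \<subseteq> f ` S"
  then have "g ` A \<subseteq> S" using hf(1) by auto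
  then obtain F where F: "fsigma_in euclidean F" "g ` A = F \<inter> S" using Q unfolding Qprop_alt by blast
  have eqA: "A = (Bn \<inter> g -` F) \<inter> f ` S"
  proof
    show "A \<subseteq> (Bn \<inter> g -` F) \<inter> f ` S" using A F(2) hf(2) by auto
    show "(Bn \<inter> g -` F) \<inter> f ` S \<subseteq> A"
    proof
      fix x assume x: "x \<in> (Bn \<inter> g -` F) \<inter> f ` S"
      then obtain s where s: "s \<in> S" "x = f s" by blast
      then have "g x \<in> F \<inter> S" using x hf(1) by auto
      then have "g x \<in> g ` A" using F(2) by simp
      then obtain a where a: "a \<in> A" "g x = g a" by blast
      then obtain s' where "a = f s'" using A by blast
      then have "a = x" using a(2) s(2) hf(1) by simp
      then show "x \<in> A" using a(1) by simp
    qed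
  qed
  show "\<exists>F. fsigma_in euclidean F \<and> A = F \<inter> f ` S"
  proof (rule exI[where x="Bn \<inter> g -` F"], rule conjI)
    show "fsigma_in euclidean (Bn \<inter> g -` F)" by (rule fsigma_preimage[OF oB hf(5) F(1)])
    show "A = (Bn \<inter> g -` F) \<inter> f ` S" by (rule eqA)
  qed
qed



fun selS :: "(nat \<Rightarrow> 'a set) \<Rightarrow> (nat \<Rightarrow> 'a set) \<Rightarrow> nat \<Rightarrow> nat set" where
  "selS B P 0 = {}"
| "selS B P (Suc j) = selS B P j \<union> (if B j \<inter> \<Union>(P ` selS B P j) = {} then {j} else {})"

lemma selS_lt: "i \<in> selS B P j \<Longrightarrow> i < j"
  by (induction j) (auto split: if_splits)

lemma selS_mono: "j \<le> k \<Longrightarrow> selS B P j \<subseteq> selS B P k"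
proof (induction k rule: dec_induct)
  case base then show ?case by simp
next
  case (step k) then show ?case by auto
qed

lemma selS_self: "i \<in> selS B P k \<Longrightarrow> i \<in> selS B P (Suc i)"
proof (induction k)
  case 0 then show ?case by simp
next
  case (Suc k)
  show ?case
  proof (cases "i \<in> selS B P k")
    case True then show ?thesis using Suc.IH by blast
  next
    case False
    then have "i = k" "B k \<inter> \<Union>(P ` selS B P k) = {}" using Suc.prems by (auto split: if_splits)
    then show ?thesis by simp
  qed
qed

lemma selS_Suc_iff: "i \<in> selS B P (Suc i) \<longleftrightarrow> B i \<inter> \<Union>(P ` selS B P i) = {}"
  using selS_lt[of i B P i] by auto

lemma part1:
  fixes B :: "nat \<Rightarrow> 'a::metric_space set" and f g :: "nat \<Rightarrow> 'a \<Rightarrow> 'a" and Y :: "'a set"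
  assumes basis: "topological_basis (range B)"
    and open_B: "\<And>n. open (B n)"
    and h: "\<And>n. homeomorphism UNIV (B n) (f n) (g n)"
    and QY: "Q_set Y" and cardY: "(card_of Y, aleph2) \<in> ordIso"
  shows "\<exists>Z::'a set. Q_set Z \<and> (card_of Z, aleph2) \<in> ordIso \<and> closure Z = UNIV
                      \<and> Delta_is Z aleph2"
proof -
  note hf = homeo_facts[OF h]
  have QpY: "Qprop Y" using QY Q_set_Qprop by blast
  have nsY: "\<not> small Y" using cardY card_aleph2_iff by blast
  define R where "R = (\<Union>n\<in>{n. small (Y \<inter> B n)}. Y \<inter> B n)"
  have smR: "small R" unfolding R_def by (rule small_UN) auto
  define Y' where "Y' = Y - R"
  have Y'Q: "Qprop Y'" using Qprop_subset[OF QpY] unfolding Y'_def by blast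
  have YY'R: "Y \<subseteq> Y' \<union> R" unfolding Y'_def by blast
  have nsY': "\<not> small Y'" using YY'R nsY small_Un[OF _ smR] small_mono by blast
  have Y'loc: "\<not> small (Y' \<inter> Op)" if Op: "open Op" "Y' \<inter> Op \<noteq> {}" for Op
  proof
    assume sm: "small (Y' \<inter> Op)"
    obtain y where y: "y \<in> Y'" "y \<in> Op" using Op(2) by blast
    obtain Bb where Bb: "Bb \<in> range B" "y \<in> Bb" "Bb \<subseteq> Op" by (rule topological_basisE[OF basis Op(1) y(2)])
    then obtain n where n: "Bb = B n" by blast
    have "\<not> small (Y \<inter> B n)"
    proof
      assume "small (Y \<inter> B n)"
      then have "y \<in> R" using y(1) Bb(2) n unfolding R_def Y'_def by blast
      then show False using y(1) unfolding Y'_def by blast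
    qed
    moreover have "Y \<inter> B n \<subseteq> (Y' \<inter> Op) \<union> R" using Bb(3) n unfolding Y'_def by blast
    ultimately show False using small_Un[OF sm smR] small_mono by blast
  qed
  have Y'card: "(card_of Y', aleph2) \<in> ordIso"
  proof -
    have "(card_of Y', card_of Y) \<in> ordLeq" by (rule card_of_mono1) (auto simp: Y'_def)
    then have "(card_of Y', aleph2) \<in> ordLeq" using ordLeq_ordIso_trans[OF _ cardY] by blast
    then show ?thesis using nsY' card_aleph2_iff by blast
  qed
  define P where "P j = f j ` Y'" for j
  have PQ: "Qprop (P j)" for j unfolding P_def by (rule Qprop_image[OF h open_B Y'Q])
  have PB: "P j \<subseteq> B j" for j unfolding P_def using hf(2) by blast
  have injP: "inj_on (f j) S" for j S using hf(6)[of j] inj_on_subset by blast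
  have Pcard: "(card_of (P j), aleph2) \<in> ordIso" for j
  proof -
    have "bij_betw (f j) Y' (P j)" unfolding P_def by (rule inj_on_imp_bij_betw[OF injP])
    then have "(card_of Y', card_of (P j)) \<in> ordIso" by (rule card_of_ordIso[THEN iffD1, OF exI])
    then have "(card_of (P j), card_of Y') \<in> ordIso" using ordIso_symmetric by blast
    then show ?thesis using ordIso_transitive[OF _ Y'card] by blast
  qed
  have nsP: "\<not> small (P j)" for j using Pcard card_aleph2_iff by blast
  have Pne: "P j \<noteq> {}" for j using nsP[of j] countable_small by force
  have Ploc: "\<not> small (P j \<inter> Op)" if Op: "open Op" "P j \<inter> Op \<noteq> {}" for j Op
  proof
    assume sm: "small (P j \<inter> Op)"
    have eq: "P j \<inter> Op = f j ` (Y' \<inter> f j -` Op)" unfolding P_def by blast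
    have o: "open (f j -` Op)" by (rule open_vimage_UNIV[OF hf(4) Op(1)])
    have ne: "Y' \<inter> f j -` Op \<noteq> {}" using Op(2) eq by blast
    have "small (Y' \<inter> f j -` Op)" using small_image_inj[OF injP] sm eq by metis
    then show False using Y'loc[OF o ne] by blast
  qed
  define T where "T = {i. i \<in> selS B P (Suc i)}"
  define Z where "Z = \<Union>(P ` T)"
  have selT: "selS B P j \<subseteq> T" for j
  proof
    fix i assume "i \<in> selS B P j"
    then have "i \<in> selS B P (Suc i)" by (rule selS_self)
    then show "i \<in> T" unfolding T_def by blast
  qed
  have Tsep: "B j \<inter> P i = {}" if "i \<in> T" "j \<in> T" "i < j" for i j
  proof -
    have "j \<in> selS B P (Suc j)" using that(2) unfolding T_def by blast
    then have "B j \<inter> \<Union>(P ` selS B P j) = {}" by (rule selS_Suc_iff[THEN iffD1])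
    moreover have "i \<in> selS B P j"
    proof -
      have "i \<in> selS B P (Suc i)" using that(1) unfolding T_def by blast
      moreover have "selS B P (Suc i) \<subseteq> selS B P j" using that(3) by (intro selS_mono) simp
      ultimately show ?thesis by blast
    qed
    ultimately show ?thesis by blast
  qed
  have T0: "0 \<in> T" unfolding T_def using selS_Suc_iff[of 0 B P] by simp
  have PZ: "P j \<subseteq> Z" if "j \<in> T" for j unfolding Z_def using that by blast
  have cT: "countable T" by (rule countableI_type)
  have nsZ: "\<not> small Z" using nsP[of 0] small_mono PZ[OF T0] by blast
  have Zcard: "(card_of Z, aleph2) \<in> ordIso"
  proof -
    have "(card_of Z, aleph2) \<in> ordLeq" unfolding Z_def
      using le_aleph2_UN[OF cT] Pcard ordIso_iff_ordLeq by blast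
    then show ?thesis using nsZ card_aleph2_iff by blast
  qed
  have QZ: "Qprop Z"
    unfolding Qprop_alt
  proof (intro allI impI)
    fix A assume AZ: "A \<subseteq> Z"
    have "\<forall>j\<in>T. \<exists>F. fsigma_in euclidean F \<and> A \<inter> P j = F \<inter> P j"
      using PQ unfolding Qprop_alt by blast
    then have "\<exists>F. \<forall>j\<in>T. fsigma_in euclidean (F j) \<and> A \<inter> P j = F j \<inter> P j" by (rule bchoice)
    then obtain F where F: "\<And>j. j \<in> T \<Longrightarrow> fsigma_in euclidean (F j)"
      "\<And>j. j \<in> T \<Longrightarrow> A \<inter> P j = F j \<inter> P j" by blast
    define G where "G j = closure (P j) \<inter> B j \<inter> F j" for j
    have fG: "fsigma_in euclidean (G j)" if "j \<in> T" for j
      unfolding G_def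
      by (intro fsigma_in_Int fsigma_closed fsigma_open open_B F(1) that closed_closure)
    have fU: "fsigma_in euclidean (\<Union>(G ` T))"
      using fG cT by (intro fsigma_in_Union) auto
    have "A = \<Union>(G ` T) \<inter> Z"
    proof
      show "A \<subseteq> \<Union>(G ` T) \<inter> Z"
      proof
        fix x assume xA: "x \<in> A"
        then have xZ: "x \<in> Z" using AZ by blast
        then obtain j where j: "j \<in> T" "x \<in> P j" unfolding Z_def by blast
        have "x \<in> F j" using F(2)[OF j(1)] xA j(2) by blast
        moreover have "x \<in> closure (P j)" using j(2) closure_subset by blast
        moreover have "x \<in> B j" using j(2) PB by blast
        ultimately show "x \<in> \<Union>(G ` T) \<inter> Z" using j(1) xZ unfolding G_def by blast
      qed
      show "\<Union>(G ` T) \<inter> Z \<subseteq> A"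
      proof
        fix x assume x: "x \<in> \<Union>(G ` T) \<inter> Z"
        then obtain j where j: "j \<in> T" "x \<in> G j" by blast
        obtain i where i: "i \<in> T" "x \<in> P i" using x unfolding Z_def by blast
        have xc: "x \<in> closure (P j)" "x \<in> B j" "x \<in> F j" using j(2) unfolding G_def by auto
        have "i = j"
        proof (rule ccontr)
          assume "i \<noteq> j"
          then consider "i < j" | "j < i" by linarith
          then show False
          proof cases
            case 1 then show False using Tsep[OF i(1) j(1)] xc(2) i(2) by blast
          next
            case 2
            have "B i \<inter> P j = {}" using Tsep[OF j(1) i(1) 2] .
            then have "B i \<inter> closure (P j) = {}" using open_Int_closure_eq_empty[OF open_B] by blast
            then show False using xc(1) i(2) PB[of i] by blast
          qed
        qed
        then have "x \<in> F j \<inter> P j" using i(2) xc(3) by simp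
        then show "x \<in> A" using F(2)[OF j(1)] by blast
      qed
    qed
    then show "\<exists>F. fsigma_in euclidean F \<and> A = F \<inter> Z" using fU by blast
  qed
  have meetB: "Z \<inter> B j \<noteq> {}" for j
  proof (cases "j \<in> T")
    case True then show ?thesis using PZ[OF True] PB[of j] Pne[of j] by blast
  next
    case False
    then have "j \<notin> selS B P (Suc j)" unfolding T_def by blast
    then have "B j \<inter> \<Union>(P ` selS B P j) \<noteq> {}" using selS_Suc_iff[of j B P] by blast
    then show ?thesis using selT[of j] unfolding Z_def by blast
  qed
  have clZ: "closure Z = UNIV"
  proof -
    have "x \<in> closure Z" for x
      unfolding closure_iff_nhds_not_empty
    proof (intro allI impI)
      fix A S assume SA: "S \<subseteq> A" and oS: "open S" and xS: "x \<in> S"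
      obtain Bb where Bb: "Bb \<in> range B" "x \<in> Bb" "Bb \<subseteq> S" by (rule topological_basisE[OF basis oS xS])
      then obtain n where "Bb = B n" by blast
      then show "Z \<inter> A \<noteq> {}" using meetB[of n] Bb(3) SA by blast
    qed
    then show ?thesis by blast
  qed
  have Zne: "Z \<noteq> {}" using PZ[OF T0] Pne[of 0] by blast
  have "Delta_is Z aleph2"
    unfolding Delta_is_def
  proof (intro conjI allI impI)
    show "\<exists>U. openin (top_of_set Z) U \<and> U \<noteq> {} \<and> (card_of U, aleph2) \<in> ordIso"
      using Zne Zcard openin_subtopology_self by blast
    fix U assume UU: "openin (top_of_set Z) U \<and> U \<noteq> {}"
    obtain Op where O: "open Op" "U = Z \<inter> Op" using openin_open[THEN iffD1, OF conjunct1[OF UU]] by blast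
    obtain z where z: "z \<in> U" using UU by blast
    then obtain j where j: "j \<in> T" "z \<in> P j" using O(2) unfolding Z_def by blast
    have "P j \<inter> Op \<noteq> {}" using z j O(2) by blast
    then have "\<not> small (P j \<inter> Op)" by (rule Ploc[OF O(1)])
    moreover have "P j \<inter> Op \<subseteq> U" using PZ[OF j(1)] O(2) by blast
    ultimately have "\<not> small U" using small_mono by blast
    then show "(aleph2, card_of U) \<in> ordLeq" using not_small_iff by blast
  qed
  moreover have "Q_set Z" using QZ nsZ small_uncountable Q_set_Qprop by blast
  ultimately show ?thesis using Zcard clZ by blast
qed



lemma open_vimage_on: "open Bn \<Longrightarrow> continuous_on Bn g \<Longrightarrow> open S \<Longrightarrow> open (Bn \<inter> g -` S)"
  using continuous_on_open_vimage[of Bn g] by (auto simp: Int_commute)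

lemma nd_transport:
  assumes h: "homeomorphism UNIV Bn f g" and oB: "open Bn" and nd: "nowhere_dense N"
  shows "nowhere_dense (g ` (N \<inter> Bn))"
proof (rule ccontr)
  note hf = homeo_facts[OF h]
  let ?N' = "g ` (N \<inter> Bn)"
  assume "\<not> nowhere_dense ?N'"
  then obtain x where x: "x \<in> interior (closure ?N')" unfolding nowhere_dense_def by blast
  define V where "V = interior (closure ?N')"
  have oV: "open V" and Vsub: "V \<subseteq> closure ?N'" unfolding V_def by (auto simp: interior_subset)
  define W where "W = Bn \<inter> g -` V"
  have oW: "open W" unfolding W_def using open_vimage_on[OF oB hf(5) oV] .
  have fxW: "f x \<in> W" unfolding W_def using hf(1,2) x V_def by auto
  have WN: "W \<subseteq> closure N"
  proof
    fix y assume yW: "y \<in> W"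
    show "y \<in> closure N"
      unfolding closure_iff_nhds_not_empty
    proof (intro allI impI)
      fix A S assume SA: "S \<subseteq> A" and oS: "open S" and yS: "y \<in> S"
      have oU: "open (f -` S)" using open_vimage_UNIV[OF hf(4) oS] .
      have gyV: "g y \<in> V" using yW unfolding W_def by auto
      have "g y \<in> f -` S" using yS hf(3) yW unfolding W_def by auto
      then have "?N' \<inter> f -` S \<noteq> {}"
        using gyV Vsub oU closure_iff_nhds_not_empty by blast
      then obtain w where w: "w \<in> N" "w \<in> Bn" "f (g w) \<in> S" by blast
      then have "w \<in> S" using hf(3) by auto
      then show "N \<inter> A \<noteq> {}" using w SA by blast
    qed
  qed
  have "W \<subseteq> interior (closure N)" using interior_maximal[OF WN oW] .
  then show False using nd fxW unfolding nowhere_dense_def by blast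
qed

lemma fc_transport:
  assumes h: "homeomorphism UNIV Bn f g" and oB: "open Bn" and fc: "first_category M"
  shows "first_category (g ` (M \<inter> Bn))"
proof -
  obtain \<U> where U: "countable \<U>" "\<And>U. U \<in> \<U> \<Longrightarrow> nowhere_dense U" "\<Union>\<U> = M"
    using fc unfolding first_category_def union_of_def by blast
  let ?U' = "(\<lambda>U. g ` (U \<inter> Bn)) ` \<U>"
  have "countable ?U'" using U(1) by simp
  moreover have "\<forall>U\<in>?U'. nowhere_dense U" using U(2) nd_transport[OF h oB] by blast
  moreover have "\<Union>?U' = g ` (M \<inter> Bn)" using U(3) by blast
  ultimately show ?thesis unfolding first_category_def union_of_def by blast
qed

lemma part2:
  fixes B :: "nat \<Rightarrow> 'a::topological_space set" and f g :: "nat \<Rightarrow> 'a \<Rightarrow> 'a" and Y :: "'a set"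
  assumes basis: "topological_basis (range B)"
    and open_B: "\<And>n. open (B n)"
    and h: "\<And>n. homeomorphism UNIV (B n) (f n) (g n)"
    and Y: "Luzin_set Y"
  shows "\<exists>Z::'a set. Luzin_set Z \<and> closure Z = UNIV \<and>
              (\<forall>U. openin (top_of_set Z) U \<and> U \<noteq> {} \<longrightarrow> uncountable U)"
proof -
  note hf = homeo_facts[OF h]
  define Z where "Z = (\<Union>n. f n ` Y)"
  have unY: "uncountable Y" using Y unfolding Luzin_set_def by blast
  have unfY: "uncountable (f n ` Y)" for n
    using unY countable_image_inj_on hf(6)[of n] inj_on_subset by blast
  have Yne: "Y \<noteq> {}" using unY by auto
  have sub0: "f 0 ` Y \<subseteq> Z" unfolding Z_def by blast
  have "uncountable Z" using countable_subset[OF sub0] unfY[of 0] by blast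
  moreover have "countable (Z \<inter> M)" if M: "first_category M" for M
  proof -
    have eq: "f n ` Y \<inter> M = f n ` (Y \<inter> g n ` (M \<inter> B n))" for n
    proof
      show "f n ` Y \<inter> M \<subseteq> f n ` (Y \<inter> g n ` (M \<inter> B n))"
      proof
        fix x assume "x \<in> f n ` Y \<inter> M"
        then obtain y where y: "y \<in> Y" "x = f n y" "x \<in> M" by blast
        then have "y \<in> g n ` (M \<inter> B n)" using hf(1,2)[of n] by (metis IntI image_eqI)
        then show "x \<in> f n ` (Y \<inter> g n ` (M \<inter> B n))" using y by blast
      qed
      show "f n ` (Y \<inter> g n ` (M \<inter> B n)) \<subseteq> f n ` Y \<inter> M"
        using hf(3) by fastforce
    qed
    have "countable (Y \<inter> g n ` (M \<inter> B n))" for n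
      using Y fc_transport[OF h open_B M, of n] unfolding Luzin_set_def by simp
    then have c: "countable (f n ` Y \<inter> M)" for n using eq by simp
    have "countable (\<Union>n. f n ` Y \<inter> M)" using c by (intro countable_UN) auto
    moreover have "Z \<inter> M = (\<Union>n. f n ` Y \<inter> M)" unfolding Z_def by blast
    ultimately show ?thesis by simp
  qed
  ultimately have L: "Luzin_set Z" unfolding Luzin_set_def by blast
  have meetB: "Z \<inter> B n \<noteq> {}" for n
    using Yne hf(2)[of n] unfolding Z_def by blast
  have "closure Z = UNIV"
  proof -
    have "x \<in> closure Z" for x
      unfolding closure_iff_nhds_not_empty
    proof (intro allI impI)
      fix A S assume "S \<subseteq> A" "open S" "x \<in> S"
      then obtain n where "B n \<subseteq> S" using topological_basisE[OF basis] by (metis rangeE)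
      then show "Z \<inter> A \<noteq> {}" using meetB[of n] \<open>S \<subseteq> A\<close> by blast
    qed
    then show ?thesis by blast
  qed
  moreover have "uncountable U" if UU: "openin (top_of_set Z) U" "U \<noteq> {}" for U
  proof -
    obtain Op where O: "open Op" "U = Z \<inter> Op" using openin_open[THEN iffD1, OF UU(1)] by blast
    obtain z where z: "z \<in> U" using UU(2) by blast
    have "z \<in> Op" using z O(2) by blast
    then obtain Bb where Bb: "Bb \<in> range B" "z \<in> Bb" "Bb \<subseteq> Op" by (rule topological_basisE[OF basis O(1)])
    then obtain n where "Bb = B n" by blast
    then have "z \<in> B n" "B n \<subseteq> Op" using Bb by auto
    then have sub0: "f n ` Y \<subseteq> B n \<inter> Z" using hf(2)[of n] unfolding Z_def by blast
    have sub: "f n ` Y \<subseteq> U" using sub0 O(2) \<open>B n \<subseteq> Op\<close> by blast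
    show ?thesis using countable_subset[OF sub] unfY[of n] by blast
  qed
  ultimately show ?thesis using L by blast
qed


theorem mainTheorem10:
  fixes B :: "nat \<Rightarrow> 'a::polish_space set"
  assumes basis: "topological_basis (range B)"
    and open_B: "\<And>n. open (B n)"
    and ne_B: "\<And>n. B n \<noteq> {}"
    and homeo_B: "\<And>n. B n homeomorphic (UNIV :: 'a set)"
  shows "((\<exists>Y::'a set. Q_set Y \<and> (card_of Y, aleph2) \<in> ordIso) \<longrightarrow>
           (\<exists>Z::'a set. Q_set Z \<and> (card_of Z, aleph2) \<in> ordIso \<and> closure Z = UNIV
                      \<and> Delta_is Z aleph2))
       \<and> ((\<exists>Y::'a set. Luzin_set Y) \<longrightarrow>
           (\<exists>Z::'a set. Luzin_set Z \<and> closure Z = UNIV \<and>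
              (\<forall>U. openin (top_of_set Z) U \<and> U \<noteq> {} \<longrightarrow> uncountable U)))"
proof -
  have ex: "\<exists>ff gg :: 'a \<Rightarrow> 'a. homeomorphism UNIV (B n) ff gg" for n
  proof -
    obtain gg ff where "homeomorphism (B n) (UNIV :: 'a set) gg ff"
      using homeo_B[of n] unfolding homeomorphic_def by blast
    then have "homeomorphism UNIV (B n) ff gg" by (rule homeomorphism_symD)
    then show ?thesis by blast
  qed
  have "\<forall>n. \<exists>p :: ('a \<Rightarrow> 'a) \<times> ('a \<Rightarrow> 'a). homeomorphism UNIV (B n) (fst p) (snd p)"
  proof
    fix n
    obtain ff gg :: "'a \<Rightarrow> 'a" where hh: "homeomorphism UNIV (B n) ff gg" using ex[of n] by blast
    show "\<exists>p :: ('a \<Rightarrow> 'a) \<times> ('a \<Rightarrow> 'a). homeomorphism UNIV (B n) (fst p) (snd p)"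
      by (rule exI[of _ "(ff, gg)"]) (simp add: hh)
  qed
  from choice[OF this] obtain p :: "nat \<Rightarrow> ('a \<Rightarrow> 'a) \<times> ('a \<Rightarrow> 'a)" where p0: "\<forall>n. homeomorphism UNIV (B n) (fst (p n)) (snd (p n))"
    by blast
  have p: "\<And>n. homeomorphism UNIV (B n) (fst (p n)) (snd (p n))" using p0 by blast
  define f where "f n = fst (p n)" for n
  define g where "g n = snd (p n)" for n
  have h: "\<And>n. homeomorphism UNIV (B n) (f n) (g n)" unfolding f_def g_def by (rule p)
  show ?thesis
  proof (intro conjI impI)
    assume "\<exists>Y::'a set. Q_set Y \<and> (card_of Y, aleph2) \<in> ordIso"
    then obtain Y :: "'a set" where "Q_set Y" "(card_of Y, aleph2) \<in> ordIso" by blast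
    then show "\<exists>Z::'a set. Q_set Z \<and> (card_of Z, aleph2) \<in> ordIso \<and> closure Z = UNIV
                      \<and> Delta_is Z aleph2"
      by (rule part1[OF basis open_B h])
  next
    assume "\<exists>Y::'a set. Luzin_set Y"
    then obtain Y :: "'a set" where "Luzin_set Y" by blast
    then show "\<exists>Z::'a set. Luzin_set Z \<and> closure Z = UNIV \<and>
              (\<forall>U. openin (top_of_set Z) U \<and> U \<noteq> {} \<longrightarrow> uncountable U)"
      by (rule part2[OF basis open_B h])
  qed
qed

end
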